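(* Let $\mu,\nu\in\mathbb{R}$ and let $U_\tau=U_\tau(so_{\mu,\nu}(2,2))$ with coproduct $\Delta$ be as described in the context. Define $$\mathcal{H}=\frac{e^{\tau H}-1}{\tau},\quad \mathcal{P}=P,\quad \mathcal{K}=K,\quad \mathcal{D}=D,\quad \mathcal{C}_1=C_1-\tau\nu D^2,\quad \mathcal{C}_2=C_2.$$ Then these elements satisfy the undeformed relations $[\mathcal K,\mathcal H]=\nu\mathcal P$, $[\mathcal K,\mathcal P]=\mu\mathcal H$, $[\mathcal H,\mathcal P]=0$, $[\mathcal D,\mathcal H]=\mathcal H$, $[\mathcal D,\mathcal C_1]=-\mathcal C_1$, $[\mathcal H,\mathcal C_1]=-2\nu\mathcal D$, $[\mathcal D,\mathcal P]=\mathcal P$, $[\mathcal D,\mathcal C_2]=-\mathcal C_2$, $[\mathcal P,\mathcal C_2]=2\mu\mathcal D$, $[\mathcal K,\mathcal C_1]=\nu\mathcal C_2$, $[\mathcal K,\mathcal C_2]=\mu\mathcal C_1$, $[\mathcal K,\mathcal D]=0$, $[\mathcal H,\mathcal C_2]=2\mathcal K$, $[\mathcal P,\mathcal C_1]=-2\mathcal K$, $[\mathcal C_1,\mathcal C_2]=0$, and their coproducts are $$\Delta(\mathcal H)=1\otimes\mathcal H+\mathcal H\otimes 1+\tau\mathcal H\otimes\mathcal H,\qquad \Delta(\mathcal P)=1\otimes\mathcal P+\mathcal P\otimes 1+\tau\mathcal P\otimes\mathcal H,$$ $$\Delta(\mathcal D)=1\otimes\mathcal D+\mathcal D\otimes\frac{1}{1+\tau\mathcal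 H},\qquad \Delta(\mathcal K)=1\otimes\mathcal K+\mathcal K\otimes 1-\tau\nu\,\mathcal D\otimes\frac{\mathcal P}{1+\tau\mathcal H},$$ $$\Delta(\mathcal C_1)=1\otimes\mathcal C_1+\mathcal C_1\otimes\frac{1}{1+\tau\mathcal H}-2\tau\nu\,\mathcal D\otimes\frac{1}{1+\tau\mathcal H}\mathcal D+\tau\nu(\mathcal D^2+\mathcal D)\otimes\frac{\tau\mathcal H}{(1+\tau\mathcal H)^2},$$ $$\Delta(\mathcal C_2)=1\otimes\mathcal C_2+\mathcal C_2\otimes\frac{1}{1+\tau\mathcal H}+2\tau\,\mathcal D\otimes\frac{1}{1+\tau\mathcal H}\mathcal K-\tau^2\nu(\mathcal D^2+\mathcal D)\otimes\frac{\mathcal P}{(1+\tau\mathcal H)^2}.$$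
   Context: $U_\tau(so_{\mu,\nu}(2,2))$ denotes the $\tau$-adically completed associative algebra over $\mathbb{R}[[\tau]]$ generated by $H,P,K,D,C_1,C_2$ subject to the relations $[K,H]=\nu e^{-\tau H}P$, $[K,P]=\mu\frac{e^{\tau H}-1}{\tau}$, $[H,P]=0$, $[K,D]=0$, $[D,H]=\frac{1-e^{-\tau H}}{\tau}$, $[D,C_1]=-C_1+\tau\nu D^2$, $[H,C_1]=-2\nu D$, $[D,P]=P$, $[D,C_2]=-C_2$, $[P,C_2]=2\mu D$, $[K,C_1]=\nu C_2$, $[K,C_2]=\mu C_1-\tau\mu\nu D^2$, $[H,C_2]=e^{-\tau H}K+Ke^{-\tau H}$, $[P,C_1]=-2K-\tau\nu(DP+PD)$, $[C_1,C_2]=-\tau\nu(DC_2+C_2D)$. Its coproduct $\Delta$ is the algebra homomorphism determined by $\Delta(H)=1\otimes H+H\otimes 1$, $\Delta(D)=1\otimes D+D\otimes e^{-\tau H}$, $\Delta(P)=1\otimes P+P\otimes e^{\tau H}$, $\Delta(C_1)=1\otimes C_1+C_1\otimes e^{-\tau H}$, $\Delta(K)=1\otimes K+K\otimes 1-\tau\nu D\otimes e^{-\tau H}P$, $\Delta(C_2)=1\otimes C_2+C_2\otimes e^{-\tau H}+2\tau D\otimes e^{-\tau H}K-\tau^2\nu(D^2+D)\otimes e^{-2\tau H}P$. Note $1+\tau\mathcal H=e^{\tau H}$ is invertible; exponentials are power series in $\tau$. *)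

theory Defs
  imports Complex_Main
begin

definition comm :: "'a::ring \<Rightarrow> 'a \<Rightarrow> 'a" where
  "comm x y = x * y - y * x"

definition tadic_lim :: "'a::ring_1 \<Rightarrow> (nat \<Rightarrow> 'a) \<Rightarrow> 'a \<Rightarrow> bool" where
  "tadic_lim t a s \<longleftrightarrow> (\<forall>N. \<exists>r. s - (\<Sum>n<N. t ^ n * a n) = t ^ N * r)"

text \<open>t is central and the algebra is t-adically complete and separated
  (every series sum_n t^n a_n has a unique t-adic limit).\<close>
definition tadic_complete :: "'a::ring_1 \<Rightarrow> bool" where
  "tadic_complete t \<longleftrightarrow> (\<forall>x. t * x = x * t) \<and> (\<forall>a. \<exists>!s. tadic_lim t a s)"

definition tad_sum :: "'a::ring_1 \<Rightarrow> (nat \<Rightarrow> 'a) \<Rightarrow> 'a" where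
  "tad_sum t a = (THE s. tadic_lim t a s)"

definition texp :: "'a::real_algebra_1 \<Rightarrow> 'a \<Rightarrow> 'a" where
  "texp t x = tad_sum t (\<lambda>n. inverse (fact n) *\<^sub>R x ^ n)"

text \<open>tdexp t x = (e^{tau x} - 1)/tau = sum_n tau^n x^(n+1) / (n+1)!\<close>
definition tdexp :: "'a::real_algebra_1 \<Rightarrow> 'a \<Rightarrow> 'a" where
  "tdexp t x = tad_sum t (\<lambda>n. inverse (fact (Suc n)) *\<^sub>R x ^ Suc n)"

definition rinv :: "'a::ring_1 \<Rightarrow> 'a" where
  "rinv x = (THE y. x * y = 1 \<and> y * x = 1)"

text \<open>Unital R-algebra homomorphism mapping the deformation parameter t to s
  (hence R[tau]-linear; t-adic continuity is then automatic).\<close>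
definition talg_hom :: "'a::real_algebra_1 \<Rightarrow> 'b::real_algebra_1 \<Rightarrow> ('a \<Rightarrow> 'b) \<Rightarrow> bool" where
  "talg_hom t s f \<longleftrightarrow> f 1 = 1 \<and> (\<forall>x y. f (x + y) = f x + f y) \<and> (\<forall>x y. f (x * y) = f x * f y)
     \<and> (\<forall>c x. f (c *\<^sub>R x) = c *\<^sub>R f x) \<and> f t = s"

end

theory Submission
  imports Defs
begin


lemma binomial_commuting:
  fixes a b :: "'a::ring_1"
  assumes ab: "a * b = b * a"
  shows "(a + b)^n = (\<Sum>k\<le>n. of_nat (n choose k) * a^k * b^(n-k))"
proof (induct n)
  case 0
  then show ?case by simp
next
  case (Suc n)
  have bak: "b * a^k = a^k * b" for k using power_commuting_commutes[OF ab, of k] by simp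
  have ofn: "b * of_nat c = of_nat c * b" "a * of_nat c = of_nat c * a" for c 
    by (simp_all add: mult_of_nat_commute)
  have decomp: "{0..n+1} = {0} \<union> {n + 1} \<union> {1..n}" and decomp2: "{0..n} = {0} \<union> {1..n}"
    by auto
  have "(a + b)^(n+1) = (a + b) * (\<Sum>k\<le>n. of_nat (n choose k) * a^k * b^(n - k))"
    using Suc.hyps by simp
  also have "\<dots> = a * (\<Sum>k\<le>n. of_nat (n choose k) * a^k * b^(n-k)) +
      b * (\<Sum>k\<le>n. of_nat (n choose k) * a^k * b^(n-k))"
    by (rule distrib_right)
  also have "\<dots> = (\<Sum>k\<le>n. of_nat (n choose k) * a^(k+1) * b^(n-k)) +
      (\<Sum>k\<le>n. of_nat (n choose k) * a^k * b^(n - k + 1))"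
  proof -
    have "b * (of_nat c * a^k * b^j) = of_nat c * a^k * b^(j+1)" for c k j
    proof -
      have "b * (of_nat c * a^k * b^j) = of_nat c * (b * a^k) * b^j" by (simp add: mult.assoc[symmetric] ofn)
      also have "\<dots> = of_nat c * a^k * b^(j+1)" by (simp add: bak mult.assoc)
      finally show ?thesis .
    qed
    moreover have "a * (of_nat c * a^k * b^j) = of_nat c * a^(k+1) * b^j" for c k j
      by (simp add: mult.assoc[symmetric] ofn)
    ultimately show ?thesis by (simp add: sum_distrib_left)
  qed
  also have "\<dots> = (\<Sum>k\<le>n. of_nat (n choose k) * a^k * b^(n + 1 - k)) +
      (\<Sum>k=1..n+1. of_nat (n choose (k - 1)) * a^k * b^(n + 1 - k))"
    by (simp add: atMost_atLeast0 sum.shift_bounds_cl_Suc_ivl Suc_diff_le field_simps del: sum.cl_ivl_Suc)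
  also have "\<dots> = b^(n + 1) +
      (\<Sum>k=1..n. of_nat (n choose k) * a^k * b^(n + 1 - k)) + (a^(n + 1) +
      (\<Sum>k=1..n. of_nat (n choose (k - 1)) * a^k * b^(n + 1 - k)))"
      using sum.nat_ivl_Suc' [of 1 n "\<lambda>k. of_nat (n choose (k-1)) * a ^ k * b ^ (n + 1 - k)"]
    by (simp add: sum.atLeast_Suc_atMost atMost_atLeast0)
  also have "\<dots> = a^(n + 1) + b^(n + 1) +
      (\<Sum>k=1..n. of_nat (n + 1 choose k) * a^k * b^(n + 1 - k))"
    by (auto simp add: algebra_simps sum.distrib [symmetric] choose_reduce_nat)
  also have "\<dots> = (\<Sum>k\<le>n+1. of_nat (n + 1 choose k) * a^k * b^(n + 1 - k))"
    using decomp by (simp add: atMost_atLeast0 algebra_simps)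
  finally show ?case
    by simp
qed

lemma tpow_central:
  fixes t :: "'a::ring_1"
  assumes ct: "\<And>x. t * x = x * t"
  shows "t ^ n * x = x * t ^ n"
  using power_commuting_commutes[of t x n] ct by simp

lemma lim_unique:
  "tadic_complete t \<Longrightarrow> tadic_lim t a x \<Longrightarrow> tadic_lim t a y \<Longrightarrow> x = y"
  unfolding tadic_complete_def by blast

lemma lim_tad_sum:
  "tadic_complete t \<Longrightarrow> tadic_lim t a (tad_sum t a)"
  unfolding tadic_complete_def tad_sum_def by (metis theI')

lemma tad_sum_eq:
  "tadic_complete t \<Longrightarrow> tadic_lim t a x \<Longrightarrow> tad_sum t a = x"
  using lim_tad_sum lim_unique by blast

lemma complete_central: "tadic_complete t \<Longrightarrow> t * x = x * t"
  unfolding tadic_complete_def by blast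

lemma lim_map:
  fixes L :: "'a::ring_1 \<Rightarrow> 'b::ring_1"
  assumes add: "\<And>x y. L (x+y) = L x + L y" and tl: "\<And>n x. L (t^n * x) = s^n * L x"
  and lim: "tadic_lim t a A"
  shows "tadic_lim s (\<lambda>n. L (a n)) (L A)"
  unfolding tadic_lim_def
proof
  fix N
  from lim obtain r where r: "A - (\<Sum>n<N. t ^ n * a n) = t ^ N * r"
    unfolding tadic_lim_def by blast
  have L0: "L 0 = 0" using add[of 0 0] by simp
  have Ldiff: "L (x - y) = L x - L y" for x y
    using add[of "x - y" y] by (simp add: algebra_simps)
  have Lsum: "L (\<Sum>n<M. f n) = (\<Sum>n<M. L (f n))" for f and M :: nat
    by (induct M) (simp_all add: L0 add)
  have "L A - (\<Sum>n<N. s ^ n * L (a n)) = L (A - (\<Sum>n<N. t ^ n * a n))"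
    by (simp add: Ldiff Lsum tl)
  also have "\<dots> = s ^ N * L r" by (simp add: r tl)
  finally show "\<exists>r. L A - (\<Sum>n<N. s ^ n * L (a n)) = s ^ N * r" by blast
qed

lemma lim_add:
  assumes "tadic_lim t a A" "tadic_lim t b B"
  shows "tadic_lim t (\<lambda>n. a n + b n) (A + B)"
  unfolding tadic_lim_def
proof
  fix N
  from assms obtain r1 r2 where "A - (\<Sum>n<N. t ^ n * a n) = t ^ N * r1"
      "B - (\<Sum>n<N. t ^ n * b n) = t ^ N * r2"
    unfolding tadic_lim_def by blast
  then have "A + B - (\<Sum>n<N. t ^ n * (a n + b n)) = t ^ N * (r1 + r2)"
    by (simp add: distrib_left sum.distrib algebra_simps)
  then show "\<exists>r. A + B - (\<Sum>n<N. t ^ n * (a n + b n)) = t ^ N * r" by blast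
qed

lemma lim_delta:
  "tadic_lim t (\<lambda>n. if n = 0 then c else 0) c"
  unfolding tadic_lim_def
proof
  fix N
  show "\<exists>r. c - (\<Sum>n<N. t ^ n * (if n = 0 then c else 0)) = t ^ N * r"
  proof (cases N)
    case 0 then show ?thesis by (intro exI[of _ c]) simp
  next
    case (Suc M)
    have "(\<Sum>n<N. t ^ n * (if n = 0 then c else 0)) = c"
    proof -
      have "(\<Sum>n<N. t ^ n * (if n = 0 then c else 0)) = (\<Sum>n<N. if n = 0 then c else 0)"
        by (rule sum.cong) auto
      also have "\<dots> = c" using Suc by (simp add: sum.delta)
      finally show ?thesis .
    qed
    then show ?thesis by (intro exI[of _ 0]) simp
  qed
qed

lemma lim_zero: "tadic_lim t (\<lambda>n. 0) 0"
  using lim_delta[of t 0] by simp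

lemma lim_shift:
  fixes t :: "'a::ring_1"
  assumes ct: "\<And>x. t * x = x * t" and lim: "tadic_lim t b B"
  shows "tadic_lim t (\<lambda>n. case n of 0 \<Rightarrow> 0 | Suc m \<Rightarrow> b m) (t * B)"
  unfolding tadic_lim_def
proof
  fix N
  show "\<exists>r. t * B - (\<Sum>n<N. t ^ n * (case n of 0 \<Rightarrow> 0 | Suc m \<Rightarrow> b m)) = t ^ N * r"
  proof (cases N)
    case 0 then show ?thesis by (intro exI[of _ "t * B"]) simp
  next
    case (Suc M)
    from lim obtain r where r: "B - (\<Sum>n<M. t ^ n * b n) = t ^ M * r"
      unfolding tadic_lim_def by blast
    have "(\<Sum>n<Suc M. t ^ n * (case n of 0 \<Rightarrow> 0 | Suc m \<Rightarrow> b m)) = (\<Sum>n<M. t ^ Suc n * b n)"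
      by (subst sum.lessThan_Suc_shift) simp
    also have "\<dots> = t * (\<Sum>n<M. t ^ n * b n)"
      by (simp add: sum_distrib_left mult.assoc)
    finally have "t * B - (\<Sum>n<N. t ^ n * (case n of 0 \<Rightarrow> 0 | Suc m \<Rightarrow> b m)) = t * (B - (\<Sum>n<M. t ^ n * b n))"
      using Suc by (simp add: algebra_simps)
    also have "\<dots> = t ^ N * r" using Suc r by (simp add: mult.assoc)
    finally show ?thesis by blast
  qed
qed

lemma cauchy_partial:
  fixes t :: "'a::ring_1"
  assumes ct: "\<And>x. t * x = x * t"
  shows "(\<Sum>n<N. t ^ n * (\<Sum>i\<le>n. a i * b (n - i)))
       = (\<Sum>i<N. t ^ i * a i * (\<Sum>j<N - i. t ^ j * b j))"
proof (induct N)
  case 0 then show ?case by simp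
next
  case (Suc N)
  have tc: "t ^ n * x = x * t ^ n" for n x using tpow_central[OF ct] .
  have e1: "(\<Sum>i<Suc N. t ^ i * a i * (\<Sum>j<Suc N - i. t ^ j * b j))
     = (\<Sum>i<N. t ^ i * a i * (\<Sum>j<Suc N - i. t ^ j * b j)) + t ^ N * a N * b 0"
    by simp
  have e2: "(\<Sum>i<N. t ^ i * a i * (\<Sum>j<Suc N - i. t ^ j * b j))
     = (\<Sum>i<N. t ^ i * a i * (\<Sum>j<N - i. t ^ j * b j)) + (\<Sum>i<N. t ^ N * (a i * b (N - i)))"
  proof -
    have "t ^ i * a i * (\<Sum>j<Suc N - i. t ^ j * b j) = t ^ i * a i * (\<Sum>j<N - i. t ^ j * b j) + t ^ N * (a i * b (N - i))"
      if "i < N" for i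
    proof -
      have "Suc N - i = Suc (N - i)" using that by simp
      then have "t ^ i * a i * (\<Sum>j<Suc N - i. t ^ j * b j) = t ^ i * a i * (\<Sum>j<N - i. t ^ j * b j) + t ^ i * a i * (t ^ (N - i) * b (N - i))"
        by (simp add: distrib_left)
      also have "t ^ i * a i * (t ^ (N - i) * b (N - i)) = t ^ i * t ^ (N - i) * (a i * b (N - i))"
        by (simp add: mult.assoc tc[of "N - i"]; simp add: mult.assoc[symmetric] tc)
      also have "\<dots> = t ^ N * (a i * b (N - i))" using that by (simp add: power_add[symmetric])
      finally show ?thesis .
    qed
    then show ?thesis by (simp add: sum.distrib)
  qed
  have "(\<Sum>n<Suc N. t ^ n * (\<Sum>i\<le>n. a i * b (n - i)))
      = (\<Sum>n<N. t ^ n * (\<Sum>i\<le>n. a i * b (n - i))) + t ^ N * (\<Sum>i\<le>N. a i * b (N - i))" by simp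
  also have "t ^ N * (\<Sum>i\<le>N. a i * b (N - i)) = (\<Sum>i<N. t ^ N * (a i * b (N - i))) + t ^ N * a N * b 0"
    by (simp add: lessThan_Suc_atMost[symmetric] sum_distrib_left mult.assoc distrib_left)
  finally show ?case using Suc e1 e2 by (simp add: algebra_simps)
qed

lemma lim_cauchy:
  fixes t :: "'a::ring_1"
  assumes ct: "\<And>x. t * x = x * t" and la: "tadic_lim t a A" and lb: "tadic_lim t b B"
  shows "tadic_lim t (\<lambda>n. \<Sum>i\<le>n. a i * b (n - i)) (A * B)"
  unfolding tadic_lim_def
proof
  fix N
  have tc: "t ^ n * x = x * t ^ n" for n x using tpow_central[OF ct] .
  from la obtain rA where rA: "A - (\<Sum>n<N. t ^ n * a n) = t ^ N * rA"
    unfolding tadic_lim_def by blast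
  from lb have "\<forall>M. \<exists>r. B - (\<Sum>n<M. t ^ n * b n) = t ^ M * r"
    unfolding tadic_lim_def by blast
  then obtain rB where rB: "\<And>M. B - (\<Sum>n<M. t ^ n * b n) = t ^ M * rB M" by metis
  have "A * B - (\<Sum>n<N. t ^ n * (\<Sum>i\<le>n. a i * b (n - i)))
     = (A - (\<Sum>n<N. t ^ n * a n)) * B + (\<Sum>i<N. t ^ i * a i * (B - (\<Sum>j<N - i. t ^ j * b j)))"
    by (simp add: cauchy_partial[OF ct] algebra_simps sum_distrib_right sum_subtractf)
  also have "\<dots> = t ^ N * (rA * B + (\<Sum>i<N. a i * rB (N - i)))"
  proof -
    have "t ^ i * a i * (B - (\<Sum>j<N - i. t ^ j * b j)) = t ^ N * (a i * rB (N - i))" if "i < N" for i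
    proof -
      have "t ^ i * a i * (B - (\<Sum>j<N - i. t ^ j * b j)) = t ^ i * a i * (t ^ (N - i) * rB (N - i))"
        by (simp add: rB)
      also have "\<dots> = t ^ i * t ^ (N - i) * (a i * rB (N - i))"
        by (simp add: mult.assoc tc[of "N - i"]; simp add: mult.assoc[symmetric] tc)
      also have "\<dots> = t ^ N * (a i * rB (N - i))" using that by (simp add: power_add[symmetric])
      finally show ?thesis .
    qed
    then show ?thesis by (simp add: rA distrib_left sum_distrib_left mult.assoc)
  qed
  finally show "\<exists>r. A * B - (\<Sum>n<N. t ^ n * (\<Sum>i\<le>n. a i * b (n - i))) = t ^ N * r" by blast
qed



lemma texp_lim: "tadic_complete t \<Longrightarrow> tadic_lim t (\<lambda>n. inverse (fact n) *\<^sub>R x ^ n) (texp t x)"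
  unfolding texp_def by (rule lim_tad_sum)

lemma tdexp_lim: "tadic_complete t \<Longrightarrow> tadic_lim t (\<lambda>n. inverse (fact (Suc n)) *\<^sub>R x ^ Suc n) (tdexp t x)"
  unfolding tdexp_def by (rule lim_tad_sum)

lemma texp_tdexp:
  fixes t x :: "'a::real_algebra_1"
  assumes c: "tadic_complete t"
  shows "texp t x = 1 + t * tdexp t x"
proof -
  note ct = complete_central[OF c]
  have "tadic_lim t (\<lambda>n. (if n = 0 then 1 else 0) + (case n of 0 \<Rightarrow> 0 | Suc m \<Rightarrow> inverse (fact (Suc m)) *\<^sub>R x ^ Suc m)) (1 + t * tdexp t x)"
    by (rule lim_add[OF lim_delta lim_shift[OF ct tdexp_lim[OF c]]])
  moreover have "(\<lambda>n. (if n = 0 then 1 else 0) + (case n of 0 \<Rightarrow> 0 | Suc m \<Rightarrow> inverse (fact (Suc m)) *\<^sub>R x ^ Suc m))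
     = (\<lambda>n. inverse (fact n) *\<^sub>R x ^ n)"
    by (rule ext) (simp split: nat.split)
  ultimately show ?thesis using tad_sum_eq[OF c] texp_def by metis
qed

lemma tdexp_zero:
  fixes t :: "'a::real_algebra_1"
  assumes c: "tadic_complete t"
  shows "tdexp t 0 = 0"
  unfolding tdexp_def using tad_sum_eq[OF c lim_zero] by simp

lemma texp_zero:
  fixes t :: "'a::real_algebra_1"
  assumes c: "tadic_complete t"
  shows "texp t 0 = 1"
  using texp_tdexp[OF c, of 0] tdexp_zero[OF c] by simp

lemma ofnat_scaleR: "(of_nat k :: 'a::real_algebra_1) * z = real k *\<^sub>R z"
  by (simp add: scaleR_conv_of_real)

lemma tdexp_coeff:
  fixes x y :: "'a::real_algebra_1"
  assumes xy: "x * y = y * x"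
  shows "inverse (fact (Suc n)) *\<^sub>R (x + y) ^ Suc n
    = inverse (fact (Suc n)) *\<^sub>R x ^ Suc n
      + (\<Sum>i\<le>n. (inverse (fact i) *\<^sub>R x ^ i) * (inverse (fact (Suc (n - i))) *\<^sub>R y ^ Suc (n - i)))"
proof -
  have "(x + y) ^ Suc n = (\<Sum>k\<le>Suc n. of_nat (Suc n choose k) * x^k * y^(Suc n-k))"
    by (rule binomial_commuting[OF xy])
  also have "\<dots> = x ^ Suc n + (\<Sum>k\<le>n. of_nat (Suc n choose k) * x^k * y^(Suc n-k))"
    by (simp add: sum.atMost_Suc)
  finally have "inverse (fact (Suc n)) *\<^sub>R (x + y) ^ Suc n = inverse (fact (Suc n)) *\<^sub>R x ^ Suc n
     + (\<Sum>k\<le>n. inverse (fact (Suc n)) *\<^sub>R (of_nat (Suc n choose k) * x^k * y^(Suc n-k)))"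
    by (simp add: scaleR_right.sum scaleR_right_distrib)
  also have "(\<Sum>k\<le>n. inverse (fact (Suc n)) *\<^sub>R (of_nat (Suc n choose k) * x^k * y^(Suc n-k)))
     = (\<Sum>i\<le>n. (inverse (fact i) *\<^sub>R x ^ i) * (inverse (fact (Suc (n - i))) *\<^sub>R y ^ Suc (n - i)))"
  proof (rule sum.cong[OF refl])
    fix k assume "k \<in> {..n}"
    then have kn: "k \<le> n" by simp
    then have e: "Suc n - k = Suc (n - k)" by simp
    have r: "inverse (fact (Suc n)) * real (Suc n choose k) = inverse (fact k) * inverse (fact (Suc (n - k)))"
    proof -
      have b: "real (Suc n choose k) = fact (Suc n) / (fact k * fact (Suc (n - k)))"
        using binomial_fact[of k "Suc n", where 'a=real] kn e by (simp only: le_SucI)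
      show ?thesis unfolding b by (simp add: field_simps del: fact_Suc)
    qed
    have "inverse (fact (Suc n)) *\<^sub>R (of_nat (Suc n choose k) * x^k * y^(Suc n-k))
      = (inverse (fact (Suc n)) * real (Suc n choose k)) *\<^sub>R (x^k * y^(Suc (n-k)))"
      by (simp add: ofnat_scaleR e mult.assoc)
    also have "\<dots> = (inverse (fact k) *\<^sub>R x ^ k) * (inverse (fact (Suc (n - k))) *\<^sub>R y ^ Suc (n - k))"
      by (simp only: r) simp
    finally show "inverse (fact (Suc n)) *\<^sub>R (of_nat (Suc n choose k) * x^k * y^(Suc n-k))
      = (inverse (fact k) *\<^sub>R x ^ k) * (inverse (fact (Suc (n - k))) *\<^sub>R y ^ Suc (n - k))" .
  qed
  finally show ?thesis .
qed

lemma tdexp_add: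
  fixes t x y :: "'a::real_algebra_1"
  assumes c: "tadic_complete t" and xy: "x * y = y * x"
  shows "tdexp t (x + y) = tdexp t x + texp t x * tdexp t y"
proof -
  note ct = complete_central[OF c]
  have "tadic_lim t (\<lambda>n. inverse (fact (Suc n)) *\<^sub>R x ^ Suc n
      + (\<Sum>i\<le>n. (inverse (fact i) *\<^sub>R x ^ i) * (inverse (fact (Suc (n - i))) *\<^sub>R y ^ Suc (n - i))))
     (tdexp t x + texp t x * tdexp t y)"
    by (rule lim_add[OF tdexp_lim[OF c] lim_cauchy[OF ct texp_lim[OF c] tdexp_lim[OF c]]])
  then have "tadic_lim t (\<lambda>n. inverse (fact (Suc n)) *\<^sub>R (x + y) ^ Suc n) (tdexp t x + texp t x * tdexp t y)"
    by (simp only: tdexp_coeff[OF xy])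
  then show ?thesis unfolding tdexp_def by (rule tad_sum_eq[OF c])
qed

lemma texp_add:
  fixes t x y :: "'a::real_algebra_1"
  assumes c: "tadic_complete t" and xy: "x * y = y * x"
  shows "texp t (x + y) = texp t x * texp t y"
proof -
  note ct = complete_central[OF c]
  have "texp t (x + y) = 1 + t * tdexp t x + texp t x * (t * tdexp t y)"
    by (simp add: texp_tdexp[OF c, of "x+y"] tdexp_add[OF c xy] distrib_left mult.assoc[symmetric] ct[of "texp t x"])
  also have "\<dots> = texp t x * texp t y"
    by (simp add: texp_tdexp[OF c, of x] texp_tdexp[OF c, of y] algebra_simps)
  finally show ?thesis .
qed



lemma commutes_lim:
  fixes t y :: "'a::ring_1"
  assumes c: "tadic_complete t" and h: "\<And>n. y * a n = a n * y" and l: "tadic_lim t a A"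
  shows "y * A = A * y"
proof -
  note tc = tpow_central[OF complete_central[OF c]]
  have l1: "tadic_lim t (\<lambda>n. y * a n) (y * A)"
    by (rule lim_map[OF _ _ l]) (simp add: distrib_left, metis mult.assoc tc)
  have l2: "tadic_lim t (\<lambda>n. a n * y) (A * y)"
    by (rule lim_map[OF _ _ l]) (simp_all add: distrib_right mult.assoc)
  from l1 have "tadic_lim t (\<lambda>n. a n * y) (y * A)" by (simp add: h)
  with l2 show ?thesis using lim_unique[OF c] by blast
qed

lemma commutes_texp:
  fixes t x y :: "'a::real_algebra_1"
  assumes c: "tadic_complete t" and xy: "y * x = x * y"
  shows "y * texp t x = texp t x * y"
  by (rule commutes_lim[OF c _ texp_lim[OF c]])
     (simp add: power_commuting_commutes[OF xy[symmetric]] del: power_Suc)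

lemma commutes_tdexp:
  fixes t x y :: "'a::real_algebra_1"
  assumes c: "tadic_complete t" and xy: "y * x = x * y"
  shows "y * tdexp t x = tdexp t x * y"
  by (rule commutes_lim[OF c _ tdexp_lim[OF c]])
     (simp add: power_commuting_commutes[OF xy[symmetric]] del: power_Suc)

lemma comm_mult_right: "comm c (a * b) = comm c a * b + a * comm c (b::'a::ring)"
  unfolding comm_def by (simp add: algebra_simps)

lemma comm_mult_left: "comm (a * b) c = a * comm b c + comm a c * (b::'a::ring)"
  unfolding comm_def by (simp add: algebra_simps)

lemma deriv_pow:
  fixes c x y :: "'a::real_algebra_1"
  assumes cxy: "comm c x = y" and xy: "x * y = y * x"
  shows "comm c (x ^ Suc n) = real (Suc n) *\<^sub>R (x ^ n * y)"
proof (induct n)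
  case 0 then show ?case using cxy by simp
next
  case (Suc n)
  have yx: "y * x ^ Suc n = x ^ Suc n * y"
    by (rule power_commuting_commutes[OF xy, symmetric])
  have "comm c (x ^ Suc (Suc n)) = comm c (x * x ^ Suc n)" by simp
  also have "\<dots> = y * x ^ Suc n + x * (real (Suc n) *\<^sub>R (x ^ n * y))"
    by (simp only: comm_mult_right cxy Suc)
  also have "\<dots> = x ^ Suc n * y + real (Suc n) *\<^sub>R (x ^ Suc n * y)"
    by (simp only: yx mult_scaleR_right mult.assoc[symmetric] power_Suc[symmetric])
  also have "\<dots> = real (Suc (Suc n)) *\<^sub>R (x ^ Suc n * y)"
  proof -
    have "real (Suc (Suc n)) = 1 + real (Suc n)" by simp
    then show ?thesis by (simp only: scaleR_add_left scaleR_one)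
  qed
  finally show ?case .
qed

lemma comm_tlin:
  fixes t :: "'a::real_algebra_1"
  assumes c: "tadic_complete t"
  shows "comm c (t ^ n * r) = t ^ n * comm c r" "comm (t ^ n * r) c = t ^ n * comm r c"
  using tpow_central[OF complete_central[OF c]]
  unfolding comm_def by (simp_all add: algebra_simps)

lemma comm_add: "comm c (x + y) = comm c x + comm c y" "comm (x + y) c = comm x c + comm y c"
  unfolding comm_def by (simp_all add: algebra_simps)

lemma comm_scaleR: "comm c (r *\<^sub>R x) = r *\<^sub>R comm c (x::'a::real_algebra_1)"
  "comm (r *\<^sub>R x) c = r *\<^sub>R comm x c"
  unfolding comm_def by (simp_all add: algebra_simps)

lemma comm_texp:
  fixes t c x y :: "'a::real_algebra_1"
  assumes c: "tadic_complete t" and cxy: "comm c x = y" and xy: "x * y = y * x"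
  shows "comm c (texp t x) = t * (texp t x * y)"
proof -
  note ct = complete_central[OF c]
  have l1: "tadic_lim t (\<lambda>n. comm c (inverse (fact n) *\<^sub>R x ^ n)) (comm c (texp t x))"
    by (rule lim_map[OF _ _ texp_lim[OF c]]) (simp_all add: comm_add comm_tlin[OF c])
  have l2: "tadic_lim t (\<lambda>n. case n of 0 \<Rightarrow> 0 | Suc m \<Rightarrow> (inverse (fact m) *\<^sub>R x ^ m) * y) (t * (texp t x * y))"
    by (rule lim_shift[OF ct lim_map[OF _ _ texp_lim[OF c]]]) (simp_all add: distrib_right mult.assoc)
  have "(\<lambda>n. comm c (inverse (fact n) *\<^sub>R x ^ n)) = (\<lambda>n. case n of 0 \<Rightarrow> 0 | Suc m \<Rightarrow> (inverse (fact m) *\<^sub>R x ^ m) * y)"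
  proof (rule ext)
    fix n show "comm c (inverse (fact n) *\<^sub>R x ^ n) = (case n of 0 \<Rightarrow> 0 | Suc m \<Rightarrow> (inverse (fact m) *\<^sub>R x ^ m) * y)"
    proof (cases n)
      case 0 then show ?thesis by (simp add: comm_def)
    next
      case (Suc m)
      have "inverse (fact (Suc m)) * real (Suc m) = (inverse (fact m) :: real)"
        by (simp del: of_nat_Suc)
      then show ?thesis using Suc
        by (simp add: comm_scaleR deriv_pow[OF cxy xy] del: of_nat_Suc fact_Suc power_Suc)
    qed
  qed
  with l1 l2 show ?thesis using lim_unique[OF c] by metis
qed

lemma comm_tdexp:
  fixes t c x y :: "'a::real_algebra_1"
  assumes c: "tadic_complete t" and cxy: "comm c x = y" and xy: "x * y = y * x"
  shows "comm c (tdexp t x) = texp t x * y"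
proof -
  have l1: "tadic_lim t (\<lambda>n. comm c (inverse (fact (Suc n)) *\<^sub>R x ^ Suc n)) (comm c (tdexp t x))"
    by (rule lim_map[OF _ _ tdexp_lim[OF c]]) (simp_all add: comm_add comm_tlin[OF c])
  have l2: "tadic_lim t (\<lambda>n. (inverse (fact n) *\<^sub>R x ^ n) * y) (texp t x * y)"
    by (rule lim_map[OF _ _ texp_lim[OF c]]) (simp_all add: distrib_right mult.assoc)
  have "(\<lambda>n. comm c (inverse (fact (Suc n)) *\<^sub>R x ^ Suc n)) = (\<lambda>n. (inverse (fact n) *\<^sub>R x ^ n) * y)"
  proof (rule ext)
    fix m
    have "inverse (fact (Suc m)) * real (Suc m) = (inverse (fact m) :: real)"
      by (simp del: of_nat_Suc)
    then show "comm c (inverse (fact (Suc m)) *\<^sub>R x ^ Suc m) = (inverse (fact m) *\<^sub>R x ^ m) * y"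
      by (simp add: comm_scaleR deriv_pow[OF cxy xy] del: of_nat_Suc fact_Suc power_Suc)
  qed
  with l1 l2 show ?thesis using lim_unique[OF c] by metis
qed



lemma sym_pow:
  fixes x c z :: "'a::real_algebra_1"
  assumes cz: "comm x c = z" and xw: "x * comm z x = comm z x * x"
  shows "2 *\<^sub>R comm (x ^ Suc n) c = real (Suc n) *\<^sub>R (x ^ n * z + z * x ^ n)"
proof (induct n)
  case 0 then show ?case using cz by (simp add: scaleR_2)
next
  case (Suc n)
  define w where "w = comm z x"
  define r where "r = real (Suc n)"
  define A where "A = x ^ Suc n * z"
  define B where "B = z * x ^ Suc n"
  define W where "W = x ^ n * w"
  have xw': "x * w = w * x" using xw w_def by simp
  have aux: "comm z (x ^ Suc n) = r *\<^sub>R W"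
    unfolding r_def W_def by (rule deriv_pow[OF w_def[symmetric] xw'])
  then have h: "B - A = r *\<^sub>R W" unfolding A_def B_def comm_def by simp
  have wx: "w * x ^ n = x ^ n * w" by (rule power_commuting_commutes[OF xw', symmetric])
  have xz: "x * z = z * x - w" unfolding w_def comm_def by simp
  have e1: "x * (x ^ n * z) = A" unfolding A_def by (simp add: mult.assoc)
  have e2: "x * (z * x ^ n) = B - W"
  proof -
    have "x * (z * x ^ n) = (z * x - w) * x ^ n" by (simp add: mult.assoc[symmetric] xz)
    also have "\<dots> = B - W" unfolding B_def W_def by (simp add: algebra_simps wx mult.assoc power_commutes)
    finally show ?thesis .
  qed
  have "2 *\<^sub>R comm (x ^ Suc (Suc n)) c = x * (2 *\<^sub>R comm (x ^ Suc n) c) + 2 *\<^sub>R B"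
    unfolding B_def using comm_mult_left[of x "x ^ Suc n" c] cz
    by (simp only: power_Suc[of x "Suc n"] scaleR_right_distrib mult_scaleR_right)
  also have "\<dots> = x * (r *\<^sub>R (x ^ n * z + z * x ^ n)) + 2 *\<^sub>R B" using Suc r_def by simp
  also have "\<dots> = r *\<^sub>R (A + (B - W)) + 2 *\<^sub>R B"
    by (simp add: distrib_left e1 e2)
  also have "\<dots> = (r + 1) *\<^sub>R (A + B)"
  proof -
    have "r *\<^sub>R (A + (B - W)) = r *\<^sub>R (A + B) - r *\<^sub>R W"
      by (simp add: scaleR_right_diff_distrib scaleR_right_distrib)
    then have "r *\<^sub>R (A + (B - W)) = r *\<^sub>R (A + B) - (B - A)" by (simp only: h)
    moreover have "r *\<^sub>R (A + B) - (B - A) + 2 *\<^sub>R B = (r + 1) *\<^sub>R (A + B)"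
      by (simp add: scaleR_add_left scaleR_right_distrib scaleR_2 algebra_simps)
    ultimately show ?thesis by simp
  qed
  also have "\<dots> = real (Suc (Suc n)) *\<^sub>R (x ^ Suc n * z + z * x ^ Suc n)"
    unfolding r_def A_def B_def by simp
  finally show ?case .
qed

lemma comm_tdexp_left:
  fixes t c x z :: "'a::real_algebra_1"
  assumes c: "tadic_complete t" and cz: "comm x c = z" and xw: "x * comm z x = comm z x * x"
  shows "comm (tdexp t x) c = (1/2) *\<^sub>R (texp t x * z + z * texp t x)"
proof -
  note tc = tpow_central[OF complete_central[OF c]]
  have l1: "tadic_lim t (\<lambda>n. comm (inverse (fact (Suc n)) *\<^sub>R x ^ Suc n) c) (comm (tdexp t x) c)"
    by (rule lim_map[OF _ _ tdexp_lim[OF c]]) (simp_all add: comm_add comm_tlin[OF c])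
  have la: "tadic_lim t (\<lambda>n. (inverse (fact n) *\<^sub>R x ^ n) * z) (texp t x * z)"
    by (rule lim_map[OF _ _ texp_lim[OF c]]) (simp_all add: distrib_right mult.assoc)
  have lb: "tadic_lim t (\<lambda>n. z * (inverse (fact n) *\<^sub>R x ^ n)) (z * texp t x)"
    by (rule lim_map[OF _ _ texp_lim[OF c]]) (simp add: distrib_left, metis mult.assoc tc)
  have l2: "tadic_lim t (\<lambda>n. (1/2) *\<^sub>R ((inverse (fact n) *\<^sub>R x ^ n) * z + z * (inverse (fact n) *\<^sub>R x ^ n)))
      ((1/2) *\<^sub>R (texp t x * z + z * texp t x))"
    by (rule lim_map[OF _ _ lim_add[OF la lb]]) (simp_all add: scaleR_right_distrib)
  have "(\<lambda>n. comm (inverse (fact (Suc n)) *\<^sub>R x ^ Suc n) c)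
     = (\<lambda>n. (1/2) *\<^sub>R ((inverse (fact n) *\<^sub>R x ^ n) * z + z * (inverse (fact n) *\<^sub>R x ^ n)))"
  proof (rule ext)
    fix n
    have s: "comm (x ^ Suc n) c = (1/2) *\<^sub>R (real (Suc n) *\<^sub>R (x ^ n * z + z * x ^ n))"
      using sym_pow[OF cz xw, of n, symmetric] by simp
    have r: "inverse (fact (Suc n)) * real (Suc n) = (inverse (fact n) :: real)"
      by (simp del: of_nat_Suc)
    show "comm (inverse (fact (Suc n)) *\<^sub>R x ^ Suc n) c
      = (1/2) *\<^sub>R ((inverse (fact n) *\<^sub>R x ^ n) * z + z * (inverse (fact n) *\<^sub>R x ^ n))"
      using r by (simp add: comm_scaleR s scaleR_right_distrib del: of_nat_Suc fact_Suc power_Suc)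
  qed
  with l1 l2 show ?thesis using lim_unique[OF c] by metis
qed

lemma hom_basic:
  fixes f :: "'a::real_algebra_1 \<Rightarrow> 'b::real_algebra_1"
  assumes h: "talg_hom t s f"
  shows "f 0 = 0" "f (- x) = - f x" "f (x - y) = f x - f y" "f (x ^ n) = f x ^ n"
    "f (t ^ n * r) = s ^ n * f r" "f 1 = 1" "f (x + y) = f x + f y" "f (x * y) = f x * f y"
    "f (c *\<^sub>R x) = c *\<^sub>R f x" "f t = s"
proof -
  have add: "f (x + y) = f x + f y" and mul: "f (x * y) = f x * f y" and one: "f 1 = 1"
    and sc: "f (c *\<^sub>R x) = c *\<^sub>R f x" and ft: "f t = s" for x y c
    using h unfolding talg_hom_def by auto
  show f0: "f 0 = 0" using add[of 0 0] by simp
  have neg: "f (- x) = - f x" for x using add[of x "- x"] f0 by (simp add: add_eq_0_iff)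
  then show "f (- x) = - f x" .
  show "f (x - y) = f x - f y" using add[of x "- y"] neg[of y] by simp
  have pw: "f (x ^ n) = f x ^ n" for x n by (induct n) (simp_all add: one mul)
  then show "f (x ^ n) = f x ^ n" .
  show "f (t ^ n * r) = s ^ n * f r" by (simp add: mul pw ft)
  show "f 1 = 1" "f (x + y) = f x + f y" "f (x * y) = f x * f y" "f (c *\<^sub>R x) = c *\<^sub>R f x" "f t = s"
    by (simp_all add: one add mul sc ft)
qed

lemma hom_texp:
  fixes f :: "'a::real_algebra_1 \<Rightarrow> 'b::real_algebra_1"
  assumes h: "talg_hom t s f" and c: "tadic_complete t" and cs: "tadic_complete s"
  shows "f (texp t x) = texp s (f x)"
proof -
  have "tadic_lim s (\<lambda>n. f (inverse (fact n) *\<^sub>R x ^ n)) (f (texp t x))"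
    by (rule lim_map[OF _ _ texp_lim[OF c]]) (simp_all add: hom_basic[OF h])
  then have "tadic_lim s (\<lambda>n. inverse (fact n) *\<^sub>R f x ^ n) (f (texp t x))"
    by (simp add: hom_basic[OF h])
  then show ?thesis unfolding texp_def by (rule tad_sum_eq[OF cs, symmetric])
qed

lemma hom_tdexp:
  fixes f :: "'a::real_algebra_1 \<Rightarrow> 'b::real_algebra_1"
  assumes h: "talg_hom t s f" and c: "tadic_complete t" and cs: "tadic_complete s"
  shows "f (tdexp t x) = tdexp s (f x)"
proof -
  have "tadic_lim s (\<lambda>n. f (inverse (fact (Suc n)) *\<^sub>R x ^ Suc n)) (f (tdexp t x))"
    by (rule lim_map[OF _ _ tdexp_lim[OF c]]) (simp_all add: hom_basic[OF h])
  then have "tadic_lim s (\<lambda>n. inverse (fact (Suc n)) *\<^sub>R f x ^ Suc n) (f (tdexp t x))"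
    by (simp only: hom_basic[OF h])
  then show ?thesis unfolding tdexp_def by (rule tad_sum_eq[OF cs, symmetric])
qed

lemma rinv_eq:
  fixes x y :: "'a::ring_1"
  assumes "x * y = 1" "y * x = 1"
  shows "rinv x = y"
  unfolding rinv_def
proof (rule the_equality)
  show "x * y = 1 \<and> y * x = 1" using assms by simp
  fix z assume "x * z = 1 \<and> z * x = 1"
  then have "z = (y * x) * z" using assms by simp
  also have "\<dots> = y" using \<open>x * z = 1 \<and> z * x = 1\<close> by (simp add: mult.assoc)
  finally show "z = y" .
qed

lemma comm_diff: "comm c (x - y) = comm c x - comm c (y::'a::ring)" "comm (x - y) c = comm x c - comm y c"
  unfolding comm_def by (simp_all add: algebra_simps)

lemma comm_anti: "comm x y = - comm y (x::'a::ring)"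
  unfolding comm_def by simp

lemma comm_t:
  fixes t :: "'a::ring"
  assumes ct: "\<And>x. t * x = x * t"
  shows "comm c (t * r) = t * comm c r" "comm (t * r) c = t * comm r c"
  unfolding comm_def by (simp_all add: right_diff_distrib mult.assoc) (metis ct mult.assoc)+

lemma comm_sq: "comm c (x ^ 2) = comm c x * x + x * comm c (x::'a::ring_1)"
  "comm (x ^ 2) c = x * comm x c + comm x c * x"
  unfolding comm_def power2_eq_square by (simp_all add: algebra_simps)

lemma comm_self: "comm x x = 0" unfolding comm_def by simp

lemma comm_neg: "comm c (- x) = - comm c (x::'a::ring)" "comm (- x) c = - comm x c"
  unfolding comm_def by simp_all


theorem mainTheorem3:
  fixes t H P K D C1 C2 :: "'a::real_algebra_1" and \<mu> \<nu> :: real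
    and s :: "'b::real_algebra_1" and i1 i2 \<Delta> :: "'a \<Rightarrow> 'b"
  assumes cA: "tadic_complete t" and cB: "tadic_complete s"
    and hi1: "talg_hom t s i1" and hi2: "talg_hom t s i2" and hD: "talg_hom t s \<Delta>"
    and i12: "\<And>x y. i1 x * i2 y = i2 y * i1 x"
    and r1: "comm K H = \<nu> *\<^sub>R (texp t (- H) * P)"
    and r2: "comm K P = \<mu> *\<^sub>R tdexp t H"
    and r3: "comm H P = 0"
    and r4: "comm K D = 0"
    and r5: "comm D H = - tdexp t (- H)"
    and r6: "comm D C1 = - C1 + \<nu> *\<^sub>R (t * D ^ 2)"
    and r7: "comm H C1 = - (2 * \<nu>) *\<^sub>R D"
    and r8: "comm D P = P"
    and r9: "comm D C2 = - C2"
    and r10: "comm P C2 = (2 * \<mu>) *\<^sub>R D"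
    and r11: "comm K C1 = \<nu> *\<^sub>R C2"
    and r12: "comm K C2 = \<mu> *\<^sub>R C1 - (\<mu> * \<nu>) *\<^sub>R (t * D ^ 2)"
    and r13: "comm H C2 = texp t (- H) * K + K * texp t (- H)"
    and r14: "comm P C1 = - 2 * K - \<nu> *\<^sub>R (t * (D * P + P * D))"
    and r15: "comm C1 C2 = - \<nu> *\<^sub>R (t * (D * C2 + C2 * D))"
    and dH: "\<Delta> H = i2 H + i1 H"
    and dD: "\<Delta> D = i2 D + i1 D * i2 (texp t (- H))"
    and dP: "\<Delta> P = i2 P + i1 P * i2 (texp t H)"
    and dC1: "\<Delta> C1 = i2 C1 + i1 C1 * i2 (texp t (- H))"
    and dK: "\<Delta> K = i2 K + i1 K - \<nu> *\<^sub>R (s * (i1 D * i2 (texp t (- H) * P)))"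
    and dC2: "\<Delta> C2 = i2 C2 + i1 C2 * i2 (texp t (- H)) + 2 * s * (i1 D * i2 (texp t (- H) * K))
                - \<nu> *\<^sub>R (s ^ 2 * (i1 (D ^ 2 + D) * i2 (texp t (- (2 * H)) * P)))"
  shows "let HH = tdexp t H; CC1 = C1 - \<nu> *\<^sub>R (t * D ^ 2);
             Ri = rinv (1 + t * HH); Rsq = rinv ((1 + t * HH) ^ 2) in
     (\<exists>y. (1 + t * HH) * y = 1 \<and> y * (1 + t * HH) = 1) \<and>
     comm K HH = \<nu> *\<^sub>R P \<and> comm K P = \<mu> *\<^sub>R HH \<and> comm HH P = 0 \<and>
     comm D HH = HH \<and> comm D CC1 = - CC1 \<and> comm HH CC1 = - (2 * \<nu>) *\<^sub>R D \<and>
     comm D P = P \<and> comm D C2 = - C2 \<and> comm P C2 = (2 * \<mu>) *\<^sub>R D \<and>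
     comm K CC1 = \<nu> *\<^sub>R C2 \<and> comm K C2 = \<mu> *\<^sub>R CC1 \<and> comm K D = 0 \<and>
     comm HH C2 = 2 * K \<and> comm P CC1 = - 2 * K \<and> comm CC1 C2 = 0 \<and>
     \<Delta> HH = i2 HH + i1 HH + s * (i1 HH * i2 HH) \<and>
     \<Delta> P = i2 P + i1 P + s * (i1 P * i2 HH) \<and>
     \<Delta> D = i2 D + i1 D * i2 Ri \<and>
     \<Delta> K = i2 K + i1 K - \<nu> *\<^sub>R (s * (i1 D * i2 (P * Ri))) \<and>
     \<Delta> CC1 = i2 CC1 + i1 CC1 * i2 Ri - (2 * \<nu>) *\<^sub>R (s * (i1 D * i2 (Ri * D)))
              + \<nu> *\<^sub>R (s * (i1 (D ^ 2 + D) * i2 (t * HH * Rsq))) \<and>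
     \<Delta> C2 = i2 C2 + i1 C2 * i2 Ri + 2 * s * (i1 D * i2 (Ri * K))
              - \<nu> *\<^sub>R (s ^ 2 * (i1 (D ^ 2 + D) * i2 (P * Rsq)))"
proof -
  have ct: "\<And>x. t * x = x * t" using complete_central[OF cA] by blast
  have cs: "\<And>x. s * x = x * s" using complete_central[OF cB] by blast
  note h1 = hom_basic[OF hi1] and h2 = hom_basic[OF hi2] and hd = hom_basic[OF hD]
  define E where "E = texp t H"
  define Ei where "Ei = texp t (- H)"
  define HH where "HH = tdexp t H"
  define G where "G = tdexp t (- H)"
  define CC1 where "CC1 = C1 - \<nu> *\<^sub>R (t * D ^ 2)"
  have F2: "E = 1 + t * HH" unfolding E_def HH_def by (rule texp_tdexp[OF cA])
  have F2m: "Ei = 1 + t * G" unfolding Ei_def G_def by (rule texp_tdexp[OF cA])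
  have EEi: "E * Ei = 1"
    using texp_add[OF cA, of H "- H"] texp_zero[OF cA] unfolding E_def Ei_def by simp
  have EiE: "Ei * E = 1"
    using texp_add[OF cA, of "- H" H] texp_zero[OF cA] unfolding E_def Ei_def by simp
  have Ei2: "texp t (- (2 * H)) = Ei * Ei"
  proof -
    have "- (2 * H) = - H + - H" by (simp add: mult_2)
    then show ?thesis using texp_add[OF cA, of "- H" "- H"] unfolding Ei_def by simp
  qed
  have Ri: "rinv (1 + t * HH) = Ei" using rinv_eq[OF EEi EiE] F2 by simp
  have Rsq: "rinv ((1 + t * HH) ^ 2) = Ei * Ei"
  proof (rule rinv_eq)
    show "(1 + t * HH) ^ 2 * (Ei * Ei) = 1"
      unfolding F2[symmetric] power2_eq_square by (simp add: mult.assoc[symmetric] EEi) (simp add: mult.assoc EEi)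
    show "Ei * Ei * (1 + t * HH) ^ 2 = 1"
      unfolding F2[symmetric] power2_eq_square by (simp add: mult.assoc[symmetric] EiE) (simp add: mult.assoc EiE)
  qed
  have HP: "H * P = P * H" using r3 unfolding comm_def by simp
  have HEi: "H * Ei = Ei * H" unfolding Ei_def by (rule commutes_texp[OF cA]) simp
  have HE: "H * E = E * H" unfolding E_def by (rule commutes_texp[OF cA]) simp
  have HG: "H * G = G * H" unfolding G_def by (rule commutes_tdexp[OF cA]) simp
  have PEi: "P * Ei = Ei * P" unfolding Ei_def by (rule commutes_texp[OF cA]) (simp add: HP)
  have PHH: "P * HH = HH * P" unfolding HH_def by (rule commutes_tdexp[OF cA]) (simp add: HP)
  define y1 where "y1 = \<nu> *\<^sub>R (Ei * P)"
  have Hy1: "H * y1 = y1 * H" unfolding y1_def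
    by (simp add: mult.assoc[symmetric] HEi) (simp add: mult.assoc HP)
  have cKH: "comm K H = y1" using r1 unfolding y1_def Ei_def .
  have EG: "E * G = - HH"
    using tdexp_add[OF cA, of H "- H"] tdexp_zero[OF cA] unfolding E_def HH_def G_def
    by (simp add: add_eq_0_iff)
  have c2: "comm K HH = \<nu> *\<^sub>R P"
  proof -
    have "comm K HH = E * y1" unfolding HH_def E_def by (rule comm_tdexp[OF cA cKH Hy1])
    also have "\<dots> = \<nu> *\<^sub>R P" unfolding y1_def by (simp add: mult.assoc[symmetric] EEi)
    finally show ?thesis .
  qed
  have c4: "comm HH P = 0" using PHH unfolding comm_def by simp
  have cDH: "comm D H = - G" using r5 unfolding G_def .
  have HmG: "H * - G = - G * H" using HG by simp
  have c5: "comm D HH = HH"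
  proof -
    have "comm D HH = E * - G" unfolding HH_def E_def by (rule comm_tdexp[OF cA cDH HmG])
    also have "\<dots> = HH" using EG by simp
    finally show ?thesis .
  qed
  note ctt = comm_t[OF ct]
  have c6: "comm D CC1 = - CC1"
  proof -
    have "comm D (D ^ 2) = 0" by (simp add: comm_sq comm_self)
    then show ?thesis unfolding CC1_def using r6 by (simp add: comm_diff comm_scaleR ctt)
  qed
  have c7: "comm HH CC1 = - (2 * \<nu>) *\<^sub>R D"
  proof -
    define z where "z = - (2 * \<nu>) *\<^sub>R D"
    have cz: "comm H C1 = z" using r7 z_def by simp
    have "comm z H = (2 * \<nu>) *\<^sub>R G" unfolding z_def by (simp add: comm_scaleR comm_neg cDH)
    then have xw: "H * comm z H = comm z H * H" by (simp add: HG)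
    have "comm HH C1 = (1/2) *\<^sub>R (E * z + z * E)" unfolding HH_def E_def
      by (rule comm_tdexp_left[OF cA cz xw])
    also have "\<dots> = - \<nu> *\<^sub>R (E * D + D * E)" unfolding z_def by (simp add: algebra_simps)
    finally have e1: "comm HH C1 = - \<nu> *\<^sub>R (E * D + D * E)" .
    have "comm HH D = - HH" using c5 comm_anti[of HH D] by simp
    then have e2: "comm HH (D ^ 2) = - (HH * D + D * HH)" by (simp add: comm_sq)
    have "comm HH CC1 = - \<nu> *\<^sub>R (E * D + D * E - t * (HH * D) - t * (D * HH))"
      unfolding CC1_def by (simp add: comm_diff comm_scaleR ctt e1 e2 algebra_simps)
    also have "E * D + D * E - t * (HH * D) - t * (D * HH) = D + D"
      unfolding F2 by (simp add: algebra_simps) (metis ct mult.assoc)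
    also have "- \<nu> *\<^sub>R (D + D) = - (2 * \<nu>) *\<^sub>R D"
      by (simp only: scaleR_right_distrib scaleR_scaleR[symmetric] scaleR_2 scaleR_minus_left minus_add_distrib)
    finally show ?thesis .
  qed
  have cKD2: "comm K (D ^ 2) = 0" using r4 by (simp add: comm_sq)
  have c11: "comm K CC1 = \<nu> *\<^sub>R C2" unfolding CC1_def using r11 cKD2
    by (simp add: comm_diff comm_scaleR ctt)
  have c12: "comm K C2 = \<mu> *\<^sub>R CC1" unfolding CC1_def using r12
    by (simp add: scaleR_right_diff_distrib)
  have c15: "comm P CC1 = - 2 * K"
  proof -
    have "comm P D = - P" using r8 comm_anti[of P D] by simp
    then have e: "comm P (D ^ 2) = - (P * D + D * P)" by (simp add: comm_sq)
    have "comm P CC1 = comm P C1 - \<nu> *\<^sub>R (t * comm P (D ^ 2))"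
      unfolding CC1_def by (simp add: comm_diff comm_scaleR ctt)
    also have "\<dots> = - 2 * K" unfolding r14 e by (simp add: algebra_simps)
    finally show ?thesis .
  qed
  have c16: "comm CC1 C2 = 0"
  proof -
    have e: "comm (D ^ 2) C2 = - (D * C2 + C2 * D)" using r9 by (simp add: comm_sq)
    have "comm CC1 C2 = comm C1 C2 - \<nu> *\<^sub>R (t * comm (D ^ 2) C2)"
      unfolding CC1_def by (simp add: comm_diff comm_scaleR ctt)
    also have "\<dots> = 0" unfolding r15 e by (simp add: algebra_simps)
    finally show ?thesis .
  qed
  have c14: "comm HH C2 = 2 * K"
  proof -
    define z where "z = Ei * K + K * Ei"
    have cz: "comm H C2 = z" using r13 unfolding z_def Ei_def .
    have KH: "K * H - H * K = y1" using cKH unfolding comm_def .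
    have "comm z H = Ei * (K * H - H * K) + (K * H - H * K) * Ei"
    proof -
      have a: "K * (Ei * H) = K * (H * Ei)" by (simp add: HEi)
      have b: "H * (Ei * K) = Ei * (H * K)" by (simp add: mult.assoc[symmetric] HEi)
      show ?thesis unfolding z_def comm_def by (simp add: algebra_simps a b)
    qed
    then have czH: "comm z H = Ei * y1 + y1 * Ei" using KH by simp
    have xw: "H * comm z H = comm z H * H" unfolding czH
      by (simp add: algebra_simps) (metis HEi Hy1 mult.assoc)
    have e1: "comm HH C2 = (1/2) *\<^sub>R (E * z + z * E)" unfolding HH_def E_def
      by (rule comm_tdexp_left[OF cA cz xw])
    have "comm K E = t * (E * y1)" unfolding E_def by (rule comm_texp[OF cA cKH Hy1])
    also have "E * y1 = \<nu> *\<^sub>R P" unfolding y1_def by (simp add: mult.assoc[symmetric] EEi)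
    finally have "K * E - E * K = \<nu> *\<^sub>R (t * P)" unfolding comm_def by simp
    then have KE: "K * E = E * K + \<nu> *\<^sub>R (t * P)" and EK: "E * K = K * E - \<nu> *\<^sub>R (t * P)"
      by (simp_all add: algebra_simps)
    have EKEi: "E * K * Ei = K - \<nu> *\<^sub>R (t * (P * Ei))"
      unfolding EK by (simp add: algebra_simps EEi; simp add: mult.assoc[symmetric] EEi)
    have EiKE: "Ei * K * E = K + \<nu> *\<^sub>R (t * (P * Ei))"
    proof -
      have "Ei * K * E = Ei * (E * K + \<nu> *\<^sub>R (t * P))" by (simp add: mult.assoc KE)
      also have "\<dots> = K + \<nu> *\<^sub>R (Ei * (t * P))" by (simp add: distrib_left mult.assoc[symmetric] EiE)
      also have "Ei * (t * P) = t * (P * Ei)"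
      proof -
        have "Ei * (t * P) = (Ei * t) * P" by (simp only: mult.assoc)
        also have "\<dots> = (t * Ei) * P" by (simp only: ct[of Ei])
        also have "\<dots> = t * (P * Ei)" by (simp only: mult.assoc PEi)
        finally show ?thesis .
      qed
      finally show ?thesis .
    qed
    have "E * z + z * E = (E * Ei) * K + E * K * Ei + Ei * K * E + K * (Ei * E)"
      unfolding z_def by (simp add: algebra_simps)
    also have "\<dots> = 2 *\<^sub>R (K + K)" unfolding EKEi EiKE EEi EiE by (simp add: scaleR_2)
    finally show ?thesis using e1 by (simp add: mult_2)
  qed
  have cDEi: "comm D Ei = Ei * Ei - Ei"
  proof -
    have a: "comm D (- H) = G" using cDH by (simp add: comm_neg)
    have b: "- H * G = G * - H" using HG by simp
    have "comm D Ei = t * (Ei * G)" unfolding Ei_def by (rule comm_texp[OF cA a b])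
    also have "\<dots> = Ei * (t * G)" by (metis ct mult.assoc)
    also have "\<dots> = Ei * Ei - Ei" using F2m by (simp add: algebra_simps)
    finally show ?thesis .
  qed
  have iHH1: "i1 HH = tdexp s (i1 H)" unfolding HH_def by (rule hom_tdexp[OF hi1 cA cB])
  have iHH2: "i2 HH = tdexp s (i2 H)" unfolding HH_def by (rule hom_tdexp[OF hi2 cA cB])
  have iE2: "i2 E = texp s (i2 H)" unfolding E_def by (rule hom_texp[OF hi2 cA cB])
  have iE2': "i2 E = 1 + s * i2 HH" unfolding F2 by (simp add: h2)
  have d17: "\<Delta> HH = i2 HH + i1 HH + s * (i1 HH * i2 HH)"
  proof -
    have "\<Delta> HH = tdexp s (i2 H + i1 H)" unfolding HH_def hom_tdexp[OF hD cA cB] dH ..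
    also have "\<dots> = i2 HH + i2 E * i1 HH"
      unfolding iHH1 iHH2 iE2 by (rule tdexp_add[OF cB i12[symmetric]])
    also have "\<dots> = i2 HH + i1 HH + s * (i2 HH * i1 HH)" unfolding iE2' by (simp add: algebra_simps)
    finally show ?thesis by (simp add: i12)
  qed
  have d18: "\<Delta> P = i2 P + i1 P + s * (i1 P * i2 HH)"
  proof -
    have "\<Delta> P = i2 P + i1 P * (1 + s * i2 HH)" using dP iE2' unfolding E_def by simp
    also have "\<dots> = i2 P + i1 P + s * (i1 P * i2 HH)" by (simp add: algebra_simps) (metis cs mult.assoc)
    finally show ?thesis .
  qed
  have d19: "\<Delta> D = i2 D + i1 D * i2 Ei" using dD unfolding Ei_def .
  have d20: "\<Delta> K = i2 K + i1 K - \<nu> *\<^sub>R (s * (i1 D * i2 (P * Ei)))" using dK unfolding Ei_def[symmetric] PEi[symmetric] .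
  have d22: "\<Delta> C2 = i2 C2 + i1 C2 * i2 Ei + 2 * s * (i1 D * i2 (Ei * K))
              - \<nu> *\<^sub>R (s ^ 2 * (i1 (D ^ 2 + D) * i2 (P * (Ei * Ei))))"
  proof -
    have "texp t (- (2 * H)) * P = P * (Ei * Ei)" unfolding Ei2 by (simp add: mult.assoc[symmetric] PEi) (simp add: mult.assoc PEi)
    then show ?thesis using dC2 unfolding Ei_def by simp
  qed
  have d21: "\<Delta> CC1 = i2 CC1 + i1 CC1 * i2 Ei - (2 * \<nu>) *\<^sub>R (s * (i1 D * i2 (Ei * D)))
              + \<nu> *\<^sub>R (s * (i1 (D ^ 2 + D) * i2 (t * HH * (Ei * Ei))))"
  proof -
    have th: "t * HH * (Ei * Ei) = Ei - Ei * Ei"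
    proof -
      have "t * HH = E - 1" using F2 by simp
      then show ?thesis by (simp add: left_diff_distrib mult.assoc[symmetric] EEi)
    qed
    define d1 where "d1 = i1 D"
    define d2 where "d2 = i2 D"
    define e where "e = i2 Ei"
    have de: "d2 * e - e * d2 = e * e - e" using arg_cong[OF cDEi, of i2] unfolding comm_def d2_def e_def
      by (simp add: h2)
    have R3: "d2 * e = e * d2 + e * e - e" using de by (simp add: algebra_simps)
    have R3': "d2 * (e * X) = e * (d2 * X) + e * (e * X) - e * X" for X
      by (simp add: mult.assoc[symmetric] R3 left_diff_distrib distrib_right)
    have R1: "e * d1 = d1 * e" unfolding e_def d1_def by (simp add: i12)
    have R1': "e * (d1 * X) = d1 * (e * X)" for X by (simp add: mult.assoc[symmetric] R1)
    have R2: "d2 * d1 = d1 * d2" unfolding d2_def d1_def by (simp add: i12)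
    have R2': "d2 * (d1 * X) = d1 * (d2 * X)" for X by (simp add: mult.assoc[symmetric] R2)
    have R4: "e * i1 C1 = i1 C1 * e" unfolding e_def by (simp add: i12)
    have "\<Delta> CC1 = i2 C1 + i1 C1 * e - \<nu> *\<^sub>R (s * (d2 + d1 * e) ^ 2)"
      unfolding CC1_def using dC1 d19 by (simp add: hd e_def d1_def d2_def Ei_def)
    also have "\<dots> = (i2 C1 - \<nu> *\<^sub>R (s * d2 ^ 2)) + (i1 C1 - \<nu> *\<^sub>R (s * d1 ^ 2)) * e
       - (2 * \<nu>) *\<^sub>R (s * (d1 * (e * d2))) + \<nu> *\<^sub>R (s * ((d1 ^ 2 + d1) * (e - e * e)))"
    proof -
      have a: "(d2 + d1 * e) ^ 2 = d2 * d2 + d2 * (d1 * e) + d1 * (e * d2) + d1 * (e * (d1 * e))"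
        by (simp add: power2_eq_square algebra_simps)
      have b: "d2 * (d1 * e) = d1 * (e * d2) + d1 * (e * e) - d1 * e"
        by (simp add: R2' R3 algebra_simps)
      have c: "e * (d1 * e) = d1 * (e * e)" by (rule R1')
      have sq: "(d2 + d1 * e) ^ 2 = d2 * d2 + d1 * (e * d2) + d1 * (e * d2) + d1 * (e * e) - d1 * e + d1 * (d1 * (e * e))"
        unfolding a b c by (simp add: algebra_simps)
      have r2: "(2 * \<nu>) *\<^sub>R X = \<nu> *\<^sub>R X + \<nu> *\<^sub>R X" for X :: 'b
        by (simp add: scaleR_2[symmetric])
      show ?thesis unfolding sq r2 by (simp add: algebra_simps power2_eq_square)
    qed
    finally show ?thesis unfolding th CC1_def
      by (simp add: h1 h2 d1_def d2_def e_def)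
  qed
  show ?thesis
    unfolding Let_def HH_def[symmetric] CC1_def[symmetric] Ri Rsq
    using EEi[unfolded F2] EiE[unfolded F2] c2 r2[folded HH_def] c4 c5 c6 c7 r8 r9 r10 c11 c12 r4 c14 c15 c16 d17 d18 d19 d20 d21 d22
    by (intro conjI exI[of _ Ei]) assumption+
qed

end
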